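(* In the discrete first-price auction with $n=2$ bidders, in the model without ties, and with values drawn independently and uniformly from $X=\{0,1,\dots,x\}$, the symmetric equilibria are exactly $\beta(v)=\lfloor v/2\rfloor$ and $\beta(v)=\lceil v/2\rceil$.
   Context: Model. There are $n$ risk-neutral bidders competing for one indivisible object. Values and bids lie in $X=\{0,1,2,\dots,x\}$ for some $x\in\mathbb N$. Each bidder privately learns a value drawn independently and uniformly from $X$ (each value has probability $1/(x+1)$). Each bidder submits a bid in $X$. A (pure) strategy is a bidding function $\beta:X\to X$. In the model without ties, bidder $i$ wins iff $b_i>b_j$ for all $j\neq i$ (if the highest bid is tied, nobody wins). In the first-price auction, a bidder with value $v_i$ bidding $b_i$ gets expected payoff $(v_i-b_i)\Pr(i\text{ wins})$. An equilibrium is a profile of bidding functions such that each bidder's bidding function maximises their expected payoff given the others' bidding functions (a pure-strategy Bayes–Nash equilibrium) and such that no bidder uses a weakly dominated bidding function (a bidding function is weakly dominated if some other bidding function yields at least as high expected payoff against every profile of opponents' bidding functions, and strictly higher against some). A symmetric equilibrium (SE) is an equilibrium in which all bidders use the same bidding function. *)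

theory Defs
  imports Complex_Main
begin

text \<open>A (pure) bidding function is a map X -> X,
  represented by a function nat => nat mapping {0..x} into {0..x} (values outside X are irrelevant).\<close>

definition strategy :: "nat \<Rightarrow> (nat \<Rightarrow> nat) \<Rightarrow> bool" where
  "strategy x \<beta> \<longleftrightarrow> (\<forall>v\<le>x. \<beta> v \<le> x)"

text \<open>Probability of winning with bid b when the opponent uses \<gamma>: the opponent's bid must be
  strictly lower (tied highest bids: nobody wins).\<close>
definition win_prob :: "nat \<Rightarrow> nat \<Rightarrow> (nat \<Rightarrow> nat) \<Rightarrow> real" where
  "win_prob x b \<gamma> = real (card {w. w \<le> x \<and> \<gamma> w < b}) / real (x + 1)"

definition payoff :: "nat \<Rightarrow> (nat \<Rightarrow> nat) \<Rightarrow> (nat \<Rightarrow> nat) \<Rightarrow> real" where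
  "payoff x \<beta> \<gamma> = (\<Sum>v\<le>x. (1 / real (x + 1)) * ((real v - real (\<beta> v)) * win_prob x (\<beta> v) \<gamma>))"

definition weakly_dominated :: "nat \<Rightarrow> (nat \<Rightarrow> nat) \<Rightarrow> bool" where
  "weakly_dominated x \<beta> \<longleftrightarrow>
     (\<exists>\<beta>'. strategy x \<beta>' \<and>
        (\<forall>\<gamma>. strategy x \<gamma> \<longrightarrow> payoff x \<beta>' \<gamma> \<ge> payoff x \<beta> \<gamma>) \<and>
        (\<exists>\<gamma>. strategy x \<gamma> \<and> payoff x \<beta>' \<gamma> > payoff x \<beta> \<gamma>))"

definition symmetric_equilibrium :: "nat \<Rightarrow> (nat \<Rightarrow> nat) \<Rightarrow> bool" where
  "symmetric_equilibrium x \<beta> \<longleftrightarrow>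
     strategy x \<beta> \<and>
     (\<forall>\<beta>'. strategy x \<beta>' \<longrightarrow> payoff x \<beta>' \<beta> \<le> payoff x \<beta> \<beta>) \<and>
     \<not> weakly_dominated x \<beta>"

end

theory Submission
  imports Defs
begin

definition Gc :: "nat \<Rightarrow> (nat \<Rightarrow> nat) \<Rightarrow> nat \<Rightarrow> nat" where
  "Gc x g b = card {w. w \<le> x \<and> g w < b}"
definition U :: "nat \<Rightarrow> (nat \<Rightarrow> nat) \<Rightarrow> nat \<Rightarrow> nat \<Rightarrow> real" where
  "U x g v b = (real v - real b) * real (Gc x g b)"
definition S :: "nat \<Rightarrow> (nat \<Rightarrow> nat) \<Rightarrow> (nat \<Rightarrow> nat) \<Rightarrow> real" where
  "S x f g = (\<Sum>v\<le>x. U x g v (f v))"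

lemma payoff_S: "payoff x f g = S x f g / (real (x+1))^2"
  unfolding payoff_def S_def U_def win_prob_def Gc_def
  by (simp add: sum_divide_distrib power2_eq_square field_simps)

lemma payoff_le_iff: "payoff x f g \<le> payoff x f' g \<longleftrightarrow> S x f g \<le> S x f' g"
  unfolding payoff_S by (simp add: divide_le_cancel)

lemma payoff_less_iff: "payoff x f g < payoff x f' g \<longleftrightarrow> S x f g < S x f' g"
  unfolding payoff_S by (simp add: divide_less_cancel)

lemma S_upd: "v \<le> x \<Longrightarrow> S x (f(v:=b)) g = S x f g - U x g v (f v) + U x g v b"
proof -
  assume v: "v \<le> x"
  have fin: "finite {..x}" by simp
  have "S x (f(v:=b)) g = U x g v b + (\<Sum>w\<in>{..x}-{v}. U x g w ((f(v:=b)) w))"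
    unfolding S_def using v by (subst sum.remove[OF fin, of v]) auto
  also have "(\<Sum>w\<in>{..x}-{v}. U x g w ((f(v:=b)) w)) = (\<Sum>w\<in>{..x}-{v}. U x g w (f w))"
    by (rule sum.cong) auto
  also have "\<dots> = S x f g - U x g v (f v)"
    unfolding S_def using v by (subst sum.remove[OF fin, of v]) auto
  finally show ?thesis by linarith
qed

lemma Gc_le: "Gc x g b \<le> x + 1"
proof -
  have "Gc x g b \<le> card {..x}" unfolding Gc_def by (rule card_mono) auto
  thus ?thesis by simp
qed

lemma Gc_0[simp]: "Gc x g 0 = 0" unfolding Gc_def by simp

lemma Gc_lower: "m \<le> x + 1 \<Longrightarrow> (\<And>w. w < m \<Longrightarrow> g w < b) \<Longrightarrow> m \<le> Gc x g b"
proof -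
  assume m: "m \<le> x + 1" and h: "\<And>w. w < m \<Longrightarrow> g w < b"
  have "card {..<m} \<le> Gc x g b" unfolding Gc_def
    by (rule card_mono) (use m h in auto)
  thus ?thesis by simp
qed

lemma Gc_upper: "(\<And>w. m \<le> w \<Longrightarrow> w \<le> x \<Longrightarrow> b \<le> g w) \<Longrightarrow> Gc x g b \<le> m"
proof -
  assume h: "\<And>w. m \<le> w \<Longrightarrow> w \<le> x \<Longrightarrow> b \<le> g w"
  have "Gc x g b \<le> card {..<m}" unfolding Gc_def
  proof (rule card_mono)
    show "{w. w \<le> x \<and> g w < b} \<subseteq> {..<m}"
    proof
      fix w assume "w \<in> {w. w \<le> x \<and> g w < b}"
      then have "w \<le> x" "g w < b" by auto
      then show "w \<in> {..<m}" using h[of w] by (cases "m \<le> w") auto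
    qed
  qed simp
  thus ?thesis by simp
qed

lemma Gc_const0: "b \<ge> 1 \<Longrightarrow> Gc x (\<lambda>_. 0) b = x + 1"
  unfolding Gc_def by simp

lemma Gc_exact: "(\<And>w. w \<le> x \<Longrightarrow> g w < b \<longleftrightarrow> w < m) \<Longrightarrow> Gc x g b = min m (x+1)"
proof -
  assume h: "\<And>w. w \<le> x \<Longrightarrow> g w < b \<longleftrightarrow> w < m"
  have "{w. w \<le> x \<and> g w < b} = {..<min m (x+1)}" using h by auto
  thus ?thesis unfolding Gc_def by simp
qed

lemma Gc_floor: "Gc x (\<lambda>w. w div 2) b = min (2*b) (x+1)"
  by (rule Gc_exact) auto

lemma Gc_ceil: "Gc x (\<lambda>w. (w+1) div 2) b = min (2*b-1) (x+1)"
  by (rule Gc_exact) auto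

lemma Gc_g0: "Gc x (\<lambda>w. (w-1) div 2) b = (if b = 0 then 0 else min (2*b+1) (x+1))"
proof (cases "b = 0")
  case False
  then have "Gc x (\<lambda>w. (w-1) div 2) b = min (2*b+1) (x+1)" by (intro Gc_exact) auto
  then show ?thesis using False by simp
qed simp


lemma strat_upd: "strategy x f \<Longrightarrow> b \<le> x \<Longrightarrow> strategy x (f(v:=b))"
  unfolding strategy_def by auto

lemma SE_BR:
  assumes se: "symmetric_equilibrium x f" and v: "v \<le> x" and b: "b \<le> x"
  shows "U x f v b \<le> U x f v (f v)"
proof -
  have st: "strategy x f" and br: "\<And>f'. strategy x f' \<Longrightarrow> payoff x f' f \<le> payoff x f f"
    using se unfolding symmetric_equilibrium_def by auto
  have "payoff x (f(v:=b)) f \<le> payoff x f f" using br strat_upd[OF st b] by blast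
  hence "S x (f(v:=b)) f \<le> S x f f" by (simp add: payoff_le_iff)
  thus ?thesis using S_upd[OF v] by simp
qed

lemma SE_dom:
  assumes se: "symmetric_equilibrium x f" and v: "v \<le> x"
  shows "f v \<le> v"
proof (rule ccontr)
  assume c: "\<not> f v \<le> v"
  have st: "strategy x f" and nd: "\<not> weakly_dominated x f"
    using se unfolding symmetric_equilibrium_def by auto
  have st': "strategy x (f(v:=0))" using strat_upd[OF st] by simp
  have ge: "payoff x (f(v:=0)) g \<ge> payoff x f g" for g
  proof -
    have "U x g v (f v) \<le> 0" unfolding U_def using c
      by (intro mult_nonpos_nonneg) auto
    moreover have "U x g v 0 = 0" unfolding U_def by simp
    ultimately have "S x f g \<le> S x (f(v:=0)) g" using S_upd[OF v, of f 0 g] by simp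
    thus ?thesis by (simp add: payoff_le_iff)
  qed
  have gt: "payoff x (f(v:=0)) (\<lambda>_. 0) > payoff x f (\<lambda>_. 0)"
  proof -
    have "U x (\<lambda>_. 0) v (f v) < 0" unfolding U_def using c Gc_const0[of "f v" x]
      by (intro mult_neg_pos) auto
    moreover have "U x (\<lambda>_. 0) v 0 = 0" unfolding U_def by simp
    ultimately have "S x f (\<lambda>_. 0) < S x (f(v:=0)) (\<lambda>_. 0)" using S_upd[OF v, of f 0] by simp
    thus ?thesis by (simp add: payoff_less_iff)
  qed
  have "strategy x (\<lambda>_. 0)" unfolding strategy_def by simp
  hence "weakly_dominated x f" unfolding weakly_dominated_def using st' ge gt by blast
  thus False using nd by simp
qed

lemma SE_strat: "symmetric_equilibrium x f \<Longrightarrow> v \<le> x \<Longrightarrow> f v \<le> x"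
  unfolding symmetric_equilibrium_def strategy_def by auto

lemma SE_G1:
  assumes se: "symmetric_equilibrium x f" and b: "b \<ge> 1"
  shows "1 \<le> Gc x f b"
  using SE_dom[OF se, of 0] b by (intro Gc_lower) auto

lemma SE_mono:
  assumes se: "symmetric_equilibrium x f" and wv: "w \<le> v" and v: "v \<le> x"
  shows "f w \<le> f v"
proof (rule ccontr)
  assume "\<not> f w \<le> f v"
  hence lt: "f v < f w" by simp
  have w: "w \<le> x" using wv v by simp
  have wv': "w < v" using lt wv by (cases "w = v") auto
  define g where "g = real (Gc x f (f w))"
  define g' where "g' = real (Gc x f (f v))"
  have h1: "(real w - real (f v)) * g' \<le> (real w - real (f w)) * g"
    using SE_BR[OF se w SE_strat[OF se v]] unfolding U_def g_def g'_def by simp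
  have h2: "(real v - real (f w)) * g \<le> (real v - real (f v)) * g'"
    using SE_BR[OF se v SE_strat[OF se w]] unfolding U_def g_def g'_def by simp
  have gg: "g' \<le> g" unfolding g_def g'_def Gc_def
    using lt by (auto intro!: card_mono)
  have "(real v - real w) * (g - g') \<le> 0" using h1 h2 by (simp add: algebra_simps)
  moreover have "real v - real w > 0" using wv' by simp
  ultimately have "g - g' \<le> 0" by (simp add: mult_le_0_iff)
  hence geq: "g = g'" using gg by simp
  have gpos: "g > 0" unfolding g_def using SE_G1[OF se, of "f w"] lt by simp
  have "(real w - real (f v)) * g \<le> (real w - real (f w)) * g" using h1 geq by simp
  hence "real w - real (f v) \<le> real w - real (f w)" using gpos by simp
  thus False using lt by simp
qed

lemma SE_Gup:
  assumes se: "symmetric_equilibrium x f" and m: "m \<le> x" and b: "b \<le> f m"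
  shows "Gc x f b \<le> m"
  by (rule Gc_upper) (use SE_mono[OF se] b m in force)

lemma SE_Glow:
  assumes se: "symmetric_equilibrium x f" and m: "1 \<le> m" "m \<le> x + 1" and b: "f (m-1) < b"
  shows "m \<le> Gc x f b"
proof (rule Gc_lower[OF m(2)])
  fix w assume "w < m"
  hence "f w \<le> f (m-1)" using m by (intro SE_mono[OF se]) auto
  thus "f w < b" using b by simp
qed

lemma Ubound:
  assumes "c' \<le> c" "G \<le> m"
  shows "(real v - real c) * real G \<le> max 0 ((real v - real c') * real m)"
proof (cases "c \<le> v")
  case True
  have "(real v - real c) * real G \<le> (real v - real c) * real m"
    using True assms by (intro mult_left_mono) auto
  also have "\<dots> \<le> (real v - real c') * real m" using assms by (intro mult_right_mono) auto
  finally show ?thesis by simp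
next
  case False
  hence "(real v - real c) * real G \<le> 0" by (intro mult_nonpos_nonneg) auto
  thus ?thesis by simp
qed

lemma Ulow:
  assumes "c \<le> v" "m \<le> G"
  shows "(real v - real c) * real m \<le> (real v - real c) * real G"
  using assms by (intro mult_left_mono) auto


lemma floor_fw:
  assumes se: "symmetric_equilibrium x f" and f1: "f 1 = 0"
  shows "v \<le> x \<Longrightarrow> f v = v div 2"
proof (induction v rule: less_induct)
  case (less v)
  note vx = less.prems
  show ?case
  proof (cases "v \<le> 1")
    case True
    then show ?thesis using SE_dom[OF se vx] f1 by (cases v) auto
  next
    case False
    obtain k where k: "v = 2*k \<or> v = 2*k+1" by (metis dvd_mult_div_cancel even_iff_mod_2_eq_zero odd_two_times_div_two_succ)
    have k1: "k \<ge> 1" using k False by auto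
    show ?thesis
    proof (cases "v = 2*k")
      case ev: True
      have i1: "f (2*k-1) = k-1" using less.IH[of "2*k-1"] ev vx k1 by simp
      have i2: "f (2*k-2) = k-1" using less.IH[of "2*k-2"] ev vx k1 by simp
      define c where "c = f v"
      have cge: "k - 1 \<le> c" using SE_mono[OF se, of "2*k-1" v] vx ev i1 c_def by simp
      have kx: "k \<le> x" using ev vx by simp
      have br: "U x f v k \<le> U x f v c" using SE_BR[OF se vx kx] c_def by simp
      have "c \<noteq> k - 1"
      proof
        assume cc: "c = k - 1"
        have g1: "Gc x f c \<le> 2*k-2" using SE_Gup[OF se, of "2*k-2" c] vx ev i2 cc by simp
        have g2: "2*k+1 \<le> Gc x f k" using SE_Glow[OF se, of "2*k+1" k] vx ev c_def cc k1 by simp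
        have u1: "U x f v c \<le> max 0 ((real v - real c) * real (2*k-2))"
          unfolding U_def by (rule Ubound[OF le_refl g1])
        have u2: "(real v - real k) * real (2*k+1) \<le> U x f v k"
          unfolding U_def using ev by (intro Ulow g2) simp
        have e: "real v = 2 * real k" "real c = real k - 1" "real (2*k-2) = 2 * real k - 2"
          using ev cc k1 by (auto simp: of_nat_diff)
        have q1: "(2 * real k - (real k - 1)) * (2 * real k - 2) = 2 * (real k * real k) - 2"
          by (simp add: algebra_simps)
        have q2: "(2 * real k - real k) * real (2*k+1) = 2 * (real k * real k) + real k"
          by (simp add: algebra_simps)
        have kk: "real k \<ge> 1" using k1 by simp
        have nn: "0 \<le> real k * real k" by simp
        have "U x f v c \<le> 0 \<or> U x f v c \<le> 2 * (real k * real k) - 2"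
          using u1 unfolding e q1 by (auto simp: max_def split: if_splits)
        then show False using u2 br kk nn unfolding e q2 by linarith
      qed
      moreover have "\<not> c \<ge> k + 1"
      proof
        assume cc: "c \<ge> k + 1"
        have g1: "Gc x f c \<le> 2*k" using SE_Gup[OF se, of "2*k" c] vx ev c_def by simp
        have g2: "2*k \<le> Gc x f k" using SE_Glow[OF se, of "2*k" k] vx ev i1 k1 by simp
        have u1: "U x f v c \<le> max 0 ((real v - real (k+1)) * real (2*k))"
          unfolding U_def by (rule Ubound[OF cc g1])
        have u2: "(real v - real k) * real (2*k) \<le> U x f v k"
          unfolding U_def using ev by (intro Ulow g2) simp
        have e: "real v = 2 * real k"
          using ev by auto
        show False using u1 u2 br k1 unfolding e by (auto simp: max_def algebra_simps split: if_splits; smt (verit) mult_nonneg_nonneg[of "real k" "real k"])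
      qed
      ultimately show ?thesis using cge ev c_def by simp
    next
      case od: False
      hence od: "v = 2*k+1" using k by simp
      have i1: "f (2*k) = k" using less.IH[of "2*k"] od vx k1 by simp
      have i2: "f (2*k-1) = k-1" using less.IH[of "2*k-1"] od vx k1 by simp
      define c where "c = f v"
      have cge: "k \<le> c" using SE_mono[OF se, of "2*k" v] vx od i1 c_def by simp
      have kx: "k \<le> x" using od vx by simp
      have br: "U x f v k \<le> U x f v c" using SE_BR[OF se vx kx] c_def by simp
      have "\<not> c \<ge> k + 1"
      proof
        assume cc: "c \<ge> k + 1"
        have g1: "Gc x f c \<le> 2*k+1" using SE_Gup[OF se, of "2*k+1" c] vx od c_def by simp
        have g2: "2*k \<le> Gc x f k" using SE_Glow[OF se, of "2*k" k] vx od i2 k1 by simp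
        have u1: "U x f v c \<le> max 0 ((real v - real (k+1)) * real (2*k+1))"
          unfolding U_def by (rule Ubound[OF cc g1])
        have u2: "(real v - real k) * real (2*k) \<le> U x f v k"
          unfolding U_def using od by (intro Ulow g2) simp
        have e: "real v = 2 * real k + 1"
          using od by auto
        show False using u1 u2 br k1 unfolding e by (auto simp: max_def algebra_simps split: if_splits; smt (verit) mult_nonneg_nonneg[of "real k" "real k"])
      qed
      then show ?thesis using cge od c_def by simp
    qed
  qed
qed


lemma contra_help:
  fixes Uc Uk A B :: real
  assumes "Uc \<le> max 0 A" "B \<le> Uk" "Uk \<le> Uc" "A < B" "0 < B"
  shows False
  using assms by (auto simp: max_def split: if_splits)

lemma ceil_fw:
  assumes se: "symmetric_equilibrium x f" and f1: "f 1 = 1"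
  shows "v \<le> x \<Longrightarrow> f v = (v + 1) div 2"
proof (induction v rule: less_induct)
  case (less v)
  note vx = less.prems
  show ?case
  proof (cases "v \<le> 1")
    case True
    then show ?thesis using SE_dom[OF se vx] f1 by (cases v) auto
  next
    case False
    obtain k where k: "v = 2*k \<or> v = 2*k+1" by (metis dvd_mult_div_cancel even_iff_mod_2_eq_zero odd_two_times_div_two_succ)
    have k1: "k \<ge> 1" using k False by auto
    have kk: "real k \<ge> 1" using k1 by simp
    have kk2: "real k * real k \<ge> real k" using mult_left_mono[of 1 "real k" "real k"] kk by simp
    show ?thesis
    proof (cases "v = 2*k")
      case ev: True
      have i1: "f (2*k-1) = k" using less.IH[of "2*k-1"] ev vx k1 by simp
      have dd: "(2*k-2+1) div 2 = k-1" using k1 by presburger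
      have i2: "f (2*k-2) = k-1" using less.IH[of "2*k-2"] ev vx k1 dd by simp
      define c where "c = f v"
      have cge: "k \<le> c" using SE_mono[OF se, of "2*k-1" v] vx ev i1 c_def by simp
      have kx: "k \<le> x" using ev vx by simp
      have br: "U x f v k \<le> U x f v c" using SE_BR[OF se vx kx] c_def by simp
      have "\<not> c \<ge> k + 1"
      proof
        assume cc: "c \<ge> k + 1"
        have g1: "Gc x f c \<le> 2*k" using SE_Gup[OF se, of "2*k" c] vx ev c_def by simp
        have m1: "2*k-1-1 = 2*k-2" by simp
        have "f (2*k-1-1) < k" unfolding m1 i2 using k1 by simp
        hence g2: "2*k-1 \<le> Gc x f k" by (intro SE_Glow[OF se]) (use vx ev k1 in auto)
        have u1: "U x f v c \<le> max 0 ((real v - real (k+1)) * real (2*k))"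
          unfolding U_def by (rule Ubound[OF cc g1])
        have u2: "(real v - real k) * real (2*k-1) \<le> U x f v k"
          unfolding U_def using ev by (intro Ulow g2) simp
        have e: "real v = 2 * real k" "real (2*k-1) = 2 * real k - 1"
          using ev k1 by (auto simp: of_nat_diff)
        show False
          apply (rule contra_help[OF u1 u2 br])
          subgoal unfolding e using kk by (simp add: algebra_simps)
          subgoal unfolding e using kk by (intro mult_pos_pos) auto
          done
      qed
      then show ?thesis using cge ev c_def by simp
    next
      case od: False
      hence od: "v = 2*k+1" using k by simp
      have i1: "f (2*k) = k" using less.IH[of "2*k"] od vx k1 by simp
      have i2: "f (2*k-1) = k" using less.IH[of "2*k-1"] od vx k1 by simp
      define c where "c = f v"
      have cge: "k \<le> c" using SE_mono[OF se, of "2*k" v] vx od i1 c_def by simp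
      have kx: "k+1 \<le> x" using od vx k1 by simp
      have br: "U x f v (k+1) \<le> U x f v c" using SE_BR[OF se vx kx] c_def by simp
      have "c \<noteq> k"
      proof
        assume cc: "c = k"
        have g1: "Gc x f c \<le> 2*k-1" using SE_Gup[OF se, of "2*k-1" c] vx od i2 cc by simp
        have g2: "2*k+2 \<le> Gc x f (k+1)" using SE_Glow[OF se, of "2*k+2" "k+1"] vx od c_def cc by simp
        have u1: "U x f v c \<le> max 0 ((real v - real c) * real (2*k-1))"
          unfolding U_def by (rule Ubound[OF le_refl g1])
        have u2: "(real v - real (k+1)) * real (2*k+2) \<le> U x f v (k+1)"
          unfolding U_def using od by (intro Ulow g2) simp
        have e: "real v = 2 * real k + 1" "real (2*k-1) = 2 * real k - 1" "real c = real k"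
          using od k1 cc by (auto simp: of_nat_diff)
        show False
          apply (rule contra_help[OF u1 u2 br])
          subgoal unfolding e using kk by (simp add: algebra_simps)
          subgoal unfolding e using kk by (intro mult_pos_pos) auto
          done
      qed
      moreover have "\<not> c \<ge> k + 2"
      proof
        assume cc: "c \<ge> k + 2"
        have g1: "Gc x f c \<le> 2*k+1" using SE_Gup[OF se, of "2*k+1" c] vx od c_def by simp
        have g2: "2*k+1 \<le> Gc x f (k+1)" using SE_Glow[OF se, of "2*k+1" "k+1"] vx od i1 by simp
        have u1: "U x f v c \<le> max 0 ((real v - real (k+2)) * real (2*k+1))"
          unfolding U_def by (rule Ubound[OF cc g1])
        have u2: "(real v - real (k+1)) * real (2*k+1) \<le> U x f v (k+1)"
          unfolding U_def using od by (intro Ulow g2) simp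
        have e: "real v = 2 * real k + 1"
          using od by auto
        show False
          apply (rule contra_help[OF u1 u2 br])
          subgoal unfolding e using kk by (simp add: algebra_simps)
          subgoal unfolding e using kk by (intro mult_pos_pos) auto
          done
      qed
      ultimately show ?thesis using cge od c_def by simp
    qed
  qed
qed


lemma payoff_cong:
  assumes "\<forall>v\<le>x. f v = f2 v" "\<forall>v\<le>x. g v = g2 v"
  shows "payoff x f g = payoff x f2 g2"
proof -
  have "\<And>b. {w. w \<le> x \<and> g w < b} = {w. w \<le> x \<and> g2 w < b}" using assms(2) by auto
  hence "\<And>b. win_prob x b g = win_prob x b g2" unfolding win_prob_def by simp
  thus ?thesis unfolding payoff_def using assms(1) by (intro sum.cong) auto
qed

lemma SE_cong:
  assumes h: "\<forall>v\<le>x. f v = f2 v"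
  shows "symmetric_equilibrium x f = symmetric_equilibrium x f2"
proof -
  have r: "\<forall>v\<le>x. h v = h v" for h :: "nat \<Rightarrow> nat" by simp
  have s: "strategy x f = strategy x f2" unfolding strategy_def using h by auto
  have p1: "\<And>f'. payoff x f' f = payoff x f' f2" using payoff_cong[OF r h] by blast
  have p2: "payoff x f f = payoff x f2 f2" using payoff_cong[OF h h] .
  have p3: "\<And>g. payoff x f g = payoff x f2 g" using payoff_cong[OF h r] by blast
  show ?thesis unfolding symmetric_equilibrium_def weakly_dominated_def s p1 p2 p3 ..
qed

lemma U1: "b \<le> 1 \<Longrightarrow> U x g 1 b = 0"
  unfolding U_def by (cases b) auto

lemma not_dom:
  assumes st0: "strategy x g0"
    and le: "\<And>v b. v \<le> x \<Longrightarrow> U x g0 v b \<le> U x g0 v (f v)"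
    and lt: "\<And>v b. v \<le> x \<Longrightarrow> b \<noteq> f v \<Longrightarrow> \<not> (v = 1 \<and> b \<le> 1) \<Longrightarrow> U x g0 v b < U x g0 v (f v)"
    and f1: "f 1 \<le> 1"
  shows "\<not> weakly_dominated x f"
proof
  assume "weakly_dominated x f"
  then obtain f' where ge: "\<And>g. strategy x g \<Longrightarrow> payoff x f' g \<ge> payoff x f g"
    and gt: "\<exists>g. strategy x g \<and> payoff x f' g > payoff x f g"
    unfolding weakly_dominated_def by blast
  have S0: "S x f g0 \<le> S x f' g0" using ge[OF st0] by (simp add: payoff_le_iff)
  have eqv: "f' v = f v \<or> (v = 1 \<and> f' v \<le> 1)" if v: "v \<le> x" for v
  proof (rule ccontr)
    assume c: "\<not> (f' v = f v \<or> (v = 1 \<and> f' v \<le> 1))"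
    have "S x f' g0 < S x f g0" unfolding S_def
    proof (rule sum_strict_mono_ex1)
      show "\<forall>w\<in>{..x}. U x g0 w (f' w) \<le> U x g0 w (f w)" using le by auto
      show "\<exists>w\<in>{..x}. U x g0 w (f' w) < U x g0 w (f w)" using lt[of v "f' v"] c v by auto
    qed simp
    thus False using S0 by simp
  qed
  have "S x f' g = S x f g" for g unfolding S_def
  proof (rule sum.cong)
    fix v assume "v \<in> {..x}"
    hence v: "v \<le> x" by simp
    show "U x g v (f' v) = U x g v (f v)"
    proof (cases "f' v = f v")
      case False
      hence "v = 1" "f' v \<le> 1" using eqv[OF v] by auto
      thus ?thesis using U1[of "f' v" x g] U1[OF f1, of x g] by simp
    qed simp
  qed simp
  hence "payoff x f' g = payoff x f g" for g unfolding payoff_S by simp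
  thus False using gt by simp
qed

lemma sign1: "b \<noteq> k \<Longrightarrow> 0 < (real k - real b) * (2 * real k - 2 * real b + 1)"
  by (cases "b < k") (auto intro!: mult_pos_pos mult_neg_neg)

lemma sign2: "b \<noteq> k \<Longrightarrow> 0 < (real k - real b) * (2 * real k - 2 * real b - 1)"
  by (cases "b < k") (auto intro!: mult_pos_pos mult_neg_neg)


lemma floor_BR:
  assumes v: "v \<le> x"
  shows "U x (\<lambda>w. w div 2) v b \<le> U x (\<lambda>w. w div 2) v (v div 2)"
proof -
  define k where "k = v div 2"
  have kv: "v = 2*k \<or> v = 2*k+1" unfolding k_def by presburger
  have Gk: "Gc x (\<lambda>w. w div 2) k = 2*k" using Gc_floor[of x k] v kv by auto
  have R: "U x (\<lambda>w. w div 2) v k = (real v - real k) * (2 * real k)" unfolding U_def Gk by simp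
  have Rnn: "0 \<le> (real v - real k) * (2 * real k)" using kv by (intro mult_nonneg_nonneg) auto
  show ?thesis
  proof (cases "v \<le> b")
    case True
    hence "U x (\<lambda>w. w div 2) v b \<le> 0" unfolding U_def by (intro mult_nonpos_nonneg) auto
    thus ?thesis using R Rnn unfolding k_def[symmetric] by linarith
  next
    case False
    have "U x (\<lambda>w. w div 2) v b \<le> (real v - real b) * (2 * real b)"
      unfolding U_def Gc_floor using False by (intro mult_left_mono) auto
    also have "\<dots> \<le> (real v - real k) * (2 * real k)"
    proof (cases "v = 2*k")
      case True
      have "0 \<le> (real k - real b) * (real k - real b)" by simp
      moreover have "(real v - real k) * (2 * real k) - (real v - real b) * (2 * real b)
          = 2 * ((real k - real b) * (real k - real b))"
        using True by (simp add: algebra_simps)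
      ultimately show ?thesis by linarith
    next
      case False
      hence v1: "v = 2*k+1" using kv by simp
      have "0 \<le> (real k - real b) * (real k + 1 - real b)"
        by (cases "b \<le> k") (auto intro!: mult_nonneg_nonneg mult_nonpos_nonpos)
      moreover have "(real v - real k) * (2 * real k) - (real v - real b) * (2 * real b)
          = 2 * ((real k - real b) * (real k + 1 - real b))"
        using v1 by (simp add: algebra_simps)
      ultimately show ?thesis by linarith
    qed
    finally show ?thesis using R k_def by simp
  qed
qed

lemma ceil_lt:
  assumes v: "v \<le> x" and bk: "b \<noteq> (v+1) div 2" and n1: "\<not> (v = 1 \<and> b \<le> 1)"
  shows "U x (\<lambda>w. (w+1) div 2) v b < U x (\<lambda>w. (w+1) div 2) v ((v+1) div 2)"
proof -
  define g where "g = (\<lambda>w::nat. (w+1) div 2)"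
  define k where "k = (v+1) div 2"
  have kv: "v = 2*k \<or> v + 1 = 2*k" unfolding k_def by presburger
  have Gb: "b \<ge> 1 \<Longrightarrow> Gc x g b \<ge> 1" unfolding g_def Gc_ceil by simp
  show ?thesis
  proof (cases "v \<le> 1")
    case True
    hence k0: "U x g v k = 0" unfolding U_def k_def using True by (cases v) auto
    have "b \<ge> 1" "v < b" using True bk n1 k_def by (cases v; auto)+
    hence "U x g v b < 0" unfolding U_def using Gb by (intro mult_neg_pos) auto
    thus ?thesis using k0 unfolding g_def k_def by simp
  next
    case False
    have k1: "k \<ge> 1" "k < v" using False kv by auto
    have Gk: "Gc x g k = 2*k - 1" unfolding g_def Gc_ceil using v kv by auto
    have R: "U x g v k = (real v - real k) * (2 * real k - 1)"
      unfolding U_def Gk using k1 by (simp add: of_nat_diff)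
    have Rp: "0 < (real v - real k) * (2 * real k - 1)" using k1 by (intro mult_pos_pos) auto
    have "U x g v b < (real v - real k) * (2 * real k - 1)"
    proof (cases "b = 0 \<or> v \<le> b")
      case True
      hence "U x g v b \<le> 0" unfolding U_def by (cases "b = 0") (simp, auto intro!: mult_nonpos_nonneg)
      thus ?thesis using Rp by simp
    next
      case False
      hence b1: "b \<ge> 1" "b < v" by auto
      have "U x g v b \<le> (real v - real b) * (2 * real b - 1)"
        unfolding U_def g_def Gc_ceil using b1 by (intro mult_left_mono) (auto simp: of_nat_diff)
      also have "\<dots> < (real v - real k) * (2 * real k - 1)"
      proof (cases "v = 2*k")
        case True
        have "(real v - real k) * (2 * real k - 1) - (real v - real b) * (2 * real b - 1)
            = (real k - real b) * (2 * real k - 2 * real b + 1)"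
          using True by (simp add: algebra_simps)
        thus ?thesis using sign1[of b k] bk k_def by linarith
      next
        case False
        hence rv: "real v = 2 * real k - 1" using kv
          by (metis add_diff_cancel_right' of_nat_1 of_nat_add of_nat_mult of_nat_numeral)
        have "(real v - real k) * (2 * real k - 1) - (real v - real b) * (2 * real b - 1)
            = (real k - real b) * (2 * real k - 2 * real b - 1)"
          unfolding rv by (simp add: algebra_simps)
        thus ?thesis using sign2[of b k] bk k_def by linarith
      qed
      finally show ?thesis .
    qed
    thus ?thesis using R unfolding g_def k_def by simp
  qed
qed

lemma floor_lt:
  assumes v: "v \<le> x" and bk: "b \<noteq> v div 2" and n1: "\<not> (v = 1 \<and> b \<le> 1)"
  shows "U x (\<lambda>w. (w-1) div 2) v b < U x (\<lambda>w. (w-1) div 2) v (v div 2)"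
proof -
  define g where "g = (\<lambda>w::nat. (w-1) div 2)"
  define k where "k = v div 2"
  have kv: "v = 2*k \<or> v = 2*k+1" unfolding k_def by presburger
  have Gb: "b \<ge> 1 \<Longrightarrow> Gc x g b \<ge> 1" unfolding g_def Gc_g0 by simp
  show ?thesis
  proof (cases "v \<le> 1")
    case True
    hence k0: "U x g v k = 0" unfolding U_def k_def using True by (cases v) auto
    have "b \<ge> 1" "v < b" using True bk n1 k_def by (cases v; auto)+
    hence "U x g v b < 0" unfolding U_def using Gb by (intro mult_neg_pos) auto
    thus ?thesis using k0 unfolding g_def k_def by simp
  next
    case False
    have k1: "k \<ge> 1" "k < v" using False kv by auto
    have Gk: "Gc x g k = 2*k + 1" unfolding g_def Gc_g0 using v kv k1 by auto
    have R: "U x g v k = (real v - real k) * (2 * real k + 1)"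
      unfolding U_def Gk by simp
    have Rp: "0 < (real v - real k) * (2 * real k + 1)" using k1 by (intro mult_pos_pos) auto
    have "U x g v b < (real v - real k) * (2 * real k + 1)"
    proof (cases "b = 0 \<or> v \<le> b")
      case True
      hence "U x g v b \<le> 0" unfolding U_def by (cases "b = 0") (simp, auto intro!: mult_nonpos_nonneg)
      thus ?thesis using Rp by simp
    next
      case False
      hence b1: "b \<ge> 1" "b < v" by auto
      have "U x g v b \<le> (real v - real b) * (2 * real b + 1)"
        unfolding U_def g_def Gc_g0 using b1 by (intro mult_left_mono) auto
      also have "\<dots> < (real v - real k) * (2 * real k + 1)"
      proof (cases "v = 2*k")
        case True
        have "(real v - real k) * (2 * real k + 1) - (real v - real b) * (2 * real b + 1)
            = (real k - real b) * (2 * real k - 2 * real b - 1)"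
          using True by (simp add: algebra_simps)
        thus ?thesis using sign2[of b k] bk k_def by linarith
      next
        case False
        hence "v = 2*k+1" using kv by simp
        hence "(real v - real k) * (2 * real k + 1) - (real v - real b) * (2 * real b + 1)
            = (real k - real b) * (2 * real k - 2 * real b + 1)"
          by (simp add: algebra_simps)
        thus ?thesis using sign1[of b k] bk k_def by linarith
      qed
      finally show ?thesis .
    qed
    thus ?thesis using R unfolding g_def k_def by simp
  qed
qed


lemma le_from_lt:
  assumes lt: "\<And>b. b \<noteq> f v \<Longrightarrow> \<not> (v = 1 \<and> b \<le> 1) \<Longrightarrow> U x g v b < U x g v (f v)"
    and f1: "v = 1 \<Longrightarrow> f v \<le> 1"
  shows "U x g v b \<le> U x g v (f v)"
proof (cases "b = f v")
  case False
  show ?thesis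
  proof (cases "v = 1 \<and> b \<le> 1")
    case True
    thus ?thesis using U1[of b x g] U1[of "f 1" x g] f1 by simp
  next
    case False
    thus ?thesis using lt[of b] \<open>b \<noteq> f v\<close> by simp
  qed
qed simp

lemma floor_SE: "symmetric_equilibrium x (\<lambda>w. w div 2)"
proof -
  let ?f = "\<lambda>w::nat. w div 2"
  have st: "strategy x ?f" unfolding strategy_def using div_le_dividend le_trans by blast
  have br: "payoff x f' ?f \<le> payoff x ?f ?f" for f'
  proof -
    have "S x f' ?f \<le> S x ?f ?f" unfolding S_def
      by (rule sum_mono) (use floor_BR in auto)
    thus ?thesis by (simp add: payoff_le_iff)
  qed
  have st0: "strategy x (\<lambda>w. (w-1) div 2)" unfolding strategy_def by auto
  have nd: "\<not> weakly_dominated x ?f"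
  proof (rule not_dom[OF st0])
    fix v b assume v: "v \<le> x"
    show "U x (\<lambda>w. (w-1) div 2) v b \<le> U x (\<lambda>w. (w-1) div 2) v (v div 2)"
      using le_from_lt[where f = ?f and v = v and x = x and g = "\<lambda>w. (w-1) div 2" and b = b] floor_lt[OF v] by auto
  next
    fix v b assume "v \<le> x" "b \<noteq> v div 2" "\<not> (v = 1 \<and> b \<le> 1)"
    thus "U x (\<lambda>w. (w-1) div 2) v b < U x (\<lambda>w. (w-1) div 2) v (v div 2)"
      by (rule floor_lt)
  qed simp
  show ?thesis unfolding symmetric_equilibrium_def using st br nd by blast
qed

lemma ceil_SE: "symmetric_equilibrium x (\<lambda>w. (w+1) div 2)"
proof -
  let ?f = "\<lambda>w::nat. (w+1) div 2"
  have st: "strategy x ?f" unfolding strategy_def by auto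
  have le: "U x ?f v b \<le> U x ?f v ((v+1) div 2)" if v: "v \<le> x" for v b
    using le_from_lt[where f = ?f and v = v and x = x and g = ?f and b = b] ceil_lt[OF v] by auto
  have br: "payoff x f' ?f \<le> payoff x ?f ?f" for f'
  proof -
    have "S x f' ?f \<le> S x ?f ?f" unfolding S_def
      by (rule sum_mono) (use le in auto)
    thus ?thesis by (simp add: payoff_le_iff)
  qed
  have nd: "\<not> weakly_dominated x ?f"
  proof (rule not_dom[OF st])
    fix v b assume v: "v \<le> x"
    show "U x ?f v b \<le> U x ?f v ((v+1) div 2)" by (rule le[OF v])
  next
    fix v b assume "v \<le> x" "b \<noteq> (v+1) div 2" "\<not> (v = 1 \<and> b \<le> 1)"
    thus "U x ?f v b < U x ?f v ((v+1) div 2)"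
      by (rule ceil_lt)
  qed simp
  show ?thesis unfolding symmetric_equilibrium_def using st br nd by blast
qed

theorem proposition2:
  fixes x :: nat and \<beta> :: "nat \<Rightarrow> nat"
  assumes "strategy x \<beta>"
  shows "symmetric_equilibrium x \<beta> \<longleftrightarrow>
           (\<forall>v\<le>x. \<beta> v = v div 2) \<or> (\<forall>v\<le>x. \<beta> v = (v + 1) div 2)"
proof
  assume se: "symmetric_equilibrium x \<beta>"
  show "(\<forall>v\<le>x. \<beta> v = v div 2) \<or> (\<forall>v\<le>x. \<beta> v = (v + 1) div 2)"
  proof (cases "x = 0")
    case True
    thus ?thesis using SE_dom[OF se, of 0] by auto
  next
    case False
    hence "\<beta> 1 \<le> 1" using SE_dom[OF se, of 1] by simp
    hence "\<beta> 1 = 0 \<or> \<beta> 1 = 1" by auto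
    thus ?thesis using floor_fw[OF se] ceil_fw[OF se] by blast
  qed
next
  assume "(\<forall>v\<le>x. \<beta> v = v div 2) \<or> (\<forall>v\<le>x. \<beta> v = (v + 1) div 2)"
  thus "symmetric_equilibrium x \<beta>"
  proof
    assume "\<forall>v\<le>x. \<beta> v = v div 2"
    thus ?thesis using SE_cong[of x \<beta> "\<lambda>w. w div 2"] floor_SE by simp
  next
    assume "\<forall>v\<le>x. \<beta> v = (v + 1) div 2"
    thus ?thesis using SE_cong[of x \<beta> "\<lambda>w. (w+1) div 2"] ceil_SE by simp
  qed
qed

end
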